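(* Fix an integer $k\ge1$, let $\Delta_k:=\log(1/2)/\log(1-2^{-k})$ and fix $\Delta>\Delta_k$. For $n\ge k$ let $m=\lceil\Delta n^k\rceil$ and consider the test $\psi_{\mathcal{L}}(V)=\mathbf{1}\{(\mathcal{L}_V)\text{ has a solution in }\mathbb{F}_2^{N_k}\}$. Under $H_0$ the data $(\ell_j,\varepsilon_j)_{j\in[m]}$ are i.i.d. with $\ell_j$ a uniformly random $k$-tuple of linearly independent linear forms and $\varepsilon_j\in\mathbb{F}_2^k$ uniform and independent of $\ell_j$; under $H_1$ the flats $V_j=\{x:\ell_{j,i}(x)=\varepsilon_{j,i}\ \forall i\}$ have joint law $\mathbf{P}_{\text{planted}}$, each given by any pair $(\ell_j,\varepsilon_j)$ describing it. Then as $n\to\infty$, $$\mathbf{P}_{\text{unif}}(\psi_{\mathcal{L}}=1)\vee\mathbf{P}_{\text{planted}}(\psi_{\mathcal{L}}=0)\to0.$$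
   Context: A $k$-flat of $\mathbb{F}_2^n$ is an affine subspace of dimension $n-k$, described as $\{x:\ell_i(x)=\varepsilon_i\ \forall i\in[k]\}$ with $\ell_1,\dots,\ell_k$ linearly independent linear forms and $\varepsilon\in\mathbb{F}_2^k$. $q_0$ is the uniform distribution on $k$-flats, $q_x$ the uniform distribution on $k$-flats not containing $x$; $\mathbf{P}_{\text{unif}}=q_0^{\otimes m}$, $\mathbf{P}_{\text{planted}}=2^{-n}\sum_{x\in\mathbb{F}_2^n}q_x^{\otimes m}$. Let $N_k=\sum_{i=0}^k\binom{n}{i}$ and index coordinates of $\mathbb{F}_2^{N_k}$ by $S\subseteq[n]$, $|S|\le k$. For linear forms $\ell=(\ell_1,\dots,\ell_k)$ and $\alpha\in\mathbb{F}_2^k$, expand $\prod_{i=1}^k(\ell_i(x)+\alpha_i)$ in $\mathbb{F}_2[x_1,\dots,x_n]$ and reduce with $x_s^2=x_s$ to $\sum_{|S|\le k}c_S(\ell,\alpha)\prod_{s\in S}x_s$; set $\mathcal{L}_{\ell,\alpha}(Y)=\sum_{|S|\le k}c_S(\ell,\alpha)Y_S$. With $\alpha_j=(1-\varepsilon_{j,i})_i$, the system $(\mathcal{L}_V)$ is: $\mathcal{L}_{\ell_j,\alpha_j}(Y)=0$ for all $j\in[m]$, and $Y_\emptyset=1$. $a\vee b=\max(a,b)$. *)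

theory Defs
  imports "HOL-Probability.Probability"
begin

text \<open>A vector x of F_2^n is identified with its support, a subset of {..<n}.
A linear form l on F_2^n is identified with its support A (a subset of {..<n}):
l(x) = sum over s in A of x_s, i.e. the parity of card (A \<inter> x) (True = 1).\<close>

definition lf_eval :: "nat set \<Rightarrow> nat set \<Rightarrow> bool" where
  "lf_eval A x = odd (card (A \<inter> x))"

text \<open>k linearly independent linear forms on F_2^n: no nonempty subfamily sums to zero.\<close>
definition forms_indep :: "nat \<Rightarrow> nat \<Rightarrow> nat set list \<Rightarrow> bool" where
  "forms_indep n k ls \<longleftrightarrow> length ls = k \<and> (\<forall>i<k. ls ! i \<subseteq> {..<n}) \<and>
     (\<forall>I. I \<subseteq> {..<k} \<and> I \<noteq> {} \<longrightarrow> (\<exists>s. odd (card {i\<in>I. s \<in> ls ! i})))"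

definition valid_pair :: "nat \<Rightarrow> nat \<Rightarrow> nat set list \<times> bool list \<Rightarrow> bool" where
  "valid_pair n k p \<longleftrightarrow> forms_indep n k (fst p) \<and> length (snd p) = k"

definition flat_of :: "nat \<Rightarrow> nat set list \<times> bool list \<Rightarrow> nat set set" where
  "flat_of n p = {x. x \<subseteq> {..<n} \<and> (\<forall>i<length (fst p). lf_eval (fst p ! i) x = snd p ! i)}"

definition flats :: "nat \<Rightarrow> nat \<Rightarrow> nat set set set" where
  "flats n k = flat_of n ` {p. valid_pair n k p}"

definition q0 :: "nat \<Rightarrow> nat \<Rightarrow> nat set set pmf" where
  "q0 n k = pmf_of_set (flats n k)"

definition qx :: "nat \<Rightarrow> nat \<Rightarrow> nat set \<Rightarrow> nat set set pmf" where
  "qx n k x = pmf_of_set {V \<in> flats n k. x \<notin> V}"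

definition P_unif_flats :: "nat \<Rightarrow> nat \<Rightarrow> nat \<Rightarrow> (nat \<Rightarrow> nat set set) pmf" where
  "P_unif_flats n k m = Pi_pmf {..<m} {} (\<lambda>_. q0 n k)"

definition P_planted :: "nat \<Rightarrow> nat \<Rightarrow> nat \<Rightarrow> (nat \<Rightarrow> nat set set) pmf" where
  "P_planted n k m = pmf_of_set (Pow {..<n}) \<bind> (\<lambda>x. Pi_pmf {..<m} {} (\<lambda>_. qx n k x))"

text \<open>H_0 on the data: i.i.d. pairs, l uniform among k-tuples of independent forms and
eps uniform in F_2^k, independent (i.e. the pair is uniform on the product set).\<close>
definition pair_unif :: "nat \<Rightarrow> nat \<Rightarrow> (nat set list \<times> bool list) pmf" where
  "pair_unif n k = pmf_of_set {p. valid_pair n k p}"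

definition P_unif_data :: "nat \<Rightarrow> nat \<Rightarrow> nat \<Rightarrow> (nat \<Rightarrow> nat set list \<times> bool list) pmf" where
  "P_unif_data n k m = Pi_pmf {..<m} ([], []) (\<lambda>_. pair_unif n k)"

text \<open>Coefficient c_S(l, alpha) of the monomial prod_{s in S} x_s in the multilinear reduction
of prod_{i<k} (l_i(x) + alpha_i) over F_2: expanding the product, each term picks for every
factor i either a variable x_s with s in l_i (Some s) or the constant alpha_i (None, only
nonzero if alpha_i = 1); after x_s^2 = x_s the term is the monomial on the set of chosen
variables. c_S is the parity of the number of terms giving monomial S.\<close>
definition coeff_c :: "nat set list \<Rightarrow> bool list \<Rightarrow> nat set \<Rightarrow> bool" where
  "coeff_c ls al S = odd (card {c :: nat option list. length c = length ls \<and>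
      (\<forall>i<length ls. (case c ! i of None \<Rightarrow> al ! i | Some s \<Rightarrow> s \<in> ls ! i)) \<and>
      {s. Some s \<in> set c} = S})"

definition L_eval :: "nat \<Rightarrow> nat \<Rightarrow> nat set list \<Rightarrow> bool list \<Rightarrow> (nat set \<Rightarrow> bool) \<Rightarrow> bool" where
  "L_eval n k ls al Y = odd (card {S. S \<subseteq> {..<n} \<and> card S \<le> k \<and> coeff_c ls al S \<and> Y S})"

definition LV_solvable :: "nat \<Rightarrow> nat \<Rightarrow> nat \<Rightarrow> (nat \<Rightarrow> nat set list \<times> bool list) \<Rightarrow> bool" where
  "LV_solvable n k m D \<longleftrightarrow> (\<exists>Y :: nat set \<Rightarrow> bool. Y {} \<and>
     (\<forall>j<m. \<not> L_eval n k (fst (D j)) (map Not (snd (D j))) Y))"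

definition Delta_k :: "nat \<Rightarrow> real" where
  "Delta_k k = ln (1/2) / ln (1 - 2 powr (- real k))"

end

theory Submission
  imports Defs
begin


lemma lists_set_Suc:
  "{c. length c = Suc k \<and> (\<forall>i<Suc k. c!i \<in> A i)} =
   (\<lambda>(a,c). a#c) ` (A 0 \<times> {c. length c = k \<and> (\<forall>i<k. c!i \<in> A (Suc i))})"
proof (rule set_eqI, rule iffI)
  fix c assume "c \<in> {c. length c = Suc k \<and> (\<forall>i<Suc k. c!i \<in> A i)}"
  then obtain a c' where c: "c = a # c'" "length c' = k" and h: "\<forall>i<Suc k. c!i \<in> A i"
    by (auto simp: length_Suc_conv)
  have "a \<in> A 0" using h c by (metis nth_Cons_0 zero_less_Suc)
  moreover have "\<forall>i<k. c'!i \<in> A (Suc i)" using h c by auto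
  ultimately show "c \<in> (\<lambda>(a,c). a#c) ` (A 0 \<times> {c. length c = k \<and> (\<forall>i<k. c!i \<in> A (Suc i))})"
    using c by auto
next
  fix c assume "c \<in> (\<lambda>(a,c). a#c) ` (A 0 \<times> {c. length c = k \<and> (\<forall>i<k. c!i \<in> A (Suc i))})"
  then show "c \<in> {c. length c = Suc k \<and> (\<forall>i<Suc k. c!i \<in> A i)}"
    by (auto simp: less_Suc_eq_0_disj)
qed

lemma card_lists_prod:
  assumes "\<And>i. i < k \<Longrightarrow> finite (A i)"
  shows "finite {c. length c = k \<and> (\<forall>i<k. c!i \<in> A i)} \<and>
         card {c. length c = k \<and> (\<forall>i<k. c!i \<in> A i)} = (\<Prod>i<k. card (A i))"
  using assms
proof (induction k arbitrary: A)
  case 0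
  then show ?case by auto
next
  case (Suc k)
  have IH: "finite {c. length c = k \<and> (\<forall>i<k. c!i \<in> A (Suc i))} \<and>
         card {c. length c = k \<and> (\<forall>i<k. c!i \<in> A (Suc i))} = (\<Prod>i<k. card (A (Suc i)))"
    using Suc by auto
  have inj: "inj_on (\<lambda>(a,c). a#c) X" for X :: "('a \<times> 'a list) set"
    by (auto simp: inj_on_def)
  have f0: "finite (A 0)" using Suc by auto
  have sh: "(\<Prod>i<Suc k. card (A i)) = card (A 0) * (\<Prod>i<k. card (A (Suc i)))"
    by (rule prod.lessThan_Suc_shift)
  show ?case unfolding lists_set_Suc sh
    using IH f0 by (simp add: card_image[OF inj] card_cartesian_product)
qed

definition Cset :: "nat set list \<Rightarrow> bool list \<Rightarrow> nat option list set" where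
  "Cset ls al = {c. length c = length ls \<and>
      (\<forall>i<length ls. (case c ! i of None \<Rightarrow> al ! i | Some s \<Rightarrow> s \<in> ls ! i))}"

definition setc :: "nat option list \<Rightarrow> nat set" where
  "setc c = {s. Some s \<in> set c}"

lemma coeff_c_Cset: "coeff_c ls al S = odd (card {c \<in> Cset ls al. setc c = S})"
  unfolding coeff_c_def Cset_def setc_def by (simp add: conj_assoc)

lemma Cset_finite:
  assumes "\<And>i. i < length ls \<Longrightarrow> finite (ls ! i)"
  shows "finite (Cset ls al)"
proof -
  have "finite {c. length c = length ls \<and> (\<forall>i<length ls. c!i \<in> insert None (Some ` (ls!i)))}"
    using card_lists_prod[of "length ls" "\<lambda>i. insert None (Some ` (ls!i))"] assms by auto
  moreover have "Cset ls al \<subseteq> {c. length c = length ls \<and> (\<forall>i<length ls. c!i \<in> insert None (Some ` (ls!i)))}"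
  proof
    fix c assume "c \<in> Cset ls al"
    then have h: "\<forall>i<length ls. (case c ! i of None \<Rightarrow> al ! i | Some s \<Rightarrow> s \<in> ls ! i)"
      "length c = length ls" by (auto simp: Cset_def)
    have "\<forall>i<length ls. c ! i \<in> insert None (Some ` (ls!i))"
    proof (intro allI impI)
      fix i assume i: "i < length ls"
      show "c ! i \<in> insert None (Some ` (ls!i))"
        using h(1)[rule_format, OF i] by (cases "c!i") auto
    qed
    then show "c \<in> {c. length c = length ls \<and> (\<forall>i<length ls. c!i \<in> insert None (Some ` (ls!i)))}"
      using h(2) by simp
  qed
  ultimately show ?thesis by (rule finite_subset[rotated])
qed

lemma setc_props:
  assumes "c \<in> Cset ls al" "\<And>i. i < length ls \<Longrightarrow> ls ! i \<subseteq> {..<n}"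
  shows "setc c \<subseteq> {..<n} \<and> card (setc c) \<le> length ls"
proof
  show "setc c \<subseteq> {..<n}"
  proof
    fix s assume "s \<in> setc c"
    then have "Some s \<in> set c" by (simp add: setc_def)
    then obtain i where i: "i < length c" "c ! i = Some s" by (metis in_set_conv_nth)
    then have "s \<in> ls ! i" "i < length ls" using assms(1) unfolding Cset_def by force+
    then show "s \<in> {..<n}" using assms(2) by blast
  qed
  have "setc c \<subseteq> the ` set c" unfolding setc_def by force
  then have "card (setc c) \<le> card (the ` set c)" by (simp add: card_mono)
  also have "\<dots> \<le> card (set c)" by (rule card_image_le) simp
  also have "\<dots> \<le> length c" by (rule card_length)
  finally show "card (setc c) \<le> length ls" using assms(1) by (simp add: Cset_def)
qed

lemma L_eval_card:
  assumes "length ls = k" "\<And>i. i < k \<Longrightarrow> ls ! i \<subseteq> {..<n}"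
  shows "L_eval n k ls al Y \<longleftrightarrow> odd (card {c \<in> Cset ls al. Y (setc c)})"
proof -
  define C where "C = Cset ls al"
  have fC: "finite C" unfolding C_def
    by (rule Cset_finite) (use assms finite_subset in blast)
  define A where "A = {S. S \<subseteq> {..<n} \<and> card S \<le> k \<and> Y S}"
  have fA: "finite A" unfolding A_def by (rule finite_subset[of _ "Pow {..<n}"]) auto
  define cnt where "cnt S = card {c \<in> C. setc c = S}" for S
  have "L_eval n k ls al Y \<longleftrightarrow> odd (card {S\<in>A. odd (cnt S)})"
    unfolding L_eval_def A_def cnt_def C_def coeff_c_Cset by (simp add: conj_ac)
  also have "\<dots> \<longleftrightarrow> odd (sum cnt A)" using even_sum_iff[OF fA, of cnt] by simp
  also have "sum cnt A = card (\<Union>S\<in>A. {c \<in> C. setc c = S})"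
    unfolding cnt_def by (rule card_UN_disjoint[symmetric]) (use fA fC in auto)
  also have "(\<Union>S\<in>A. {c \<in> C. setc c = S}) = {c \<in> C. Y (setc c)}"
    using setc_props[of _ ls al n] assms unfolding A_def C_def by auto
  finally show ?thesis unfolding C_def .
qed

lemma planted_eval:
  assumes len: "length ls = k" and sub: "\<And>i. i < k \<Longrightarrow> ls ! i \<subseteq> {..<n}"
    and le: "length eps = k" and i0: "i0 < k" and ne: "lf_eval (ls ! i0) x \<noteq> eps ! i0"
  shows "\<not> L_eval n k ls (map Not eps) (\<lambda>S. S \<subseteq> x)"
proof -
  define al where "al = map Not eps"
  define A where "A i = (if al ! i then {None} else {}) \<union> Some ` (ls ! i \<inter> x)" for i
  have finA: "finite (A i)" if "i < k" for i
  proof -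
    have "finite (ls ! i \<inter> x)" using sub[OF that] finite_subset by blast
    then show ?thesis unfolding A_def by simp
  qed
  have eq: "{c \<in> Cset ls al. setc c \<subseteq> x} = {c. length c = k \<and> (\<forall>i<k. c!i \<in> A i)}"
  proof (rule set_eqI, rule iffI)
    fix c assume "c \<in> {c \<in> Cset ls al. setc c \<subseteq> x}"
    then have h: "\<forall>i<k. (case c ! i of None \<Rightarrow> al ! i | Some s \<Rightarrow> s \<in> ls ! i)"
      "length c = k" "setc c \<subseteq> x" using len by (auto simp: Cset_def)
    have "\<forall>i<k. c!i \<in> A i"
    proof (intro allI impI)
      fix i assume i: "i < k"
      show "c ! i \<in> A i"
      proof (cases "c ! i")
        case None then show ?thesis using h(1) i by (auto simp: A_def)
      next
        case (Some s)
        then have "Some s \<in> set c" using i h(2) by (metis nth_mem)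
        then have "s \<in> x" using h(3) by (auto simp: setc_def)
        then show ?thesis using h(1) i Some by (auto simp: A_def)
      qed
    qed
    then show "c \<in> {c. length c = k \<and> (\<forall>i<k. c!i \<in> A i)}" using h(2) by simp
  next
    fix c assume "c \<in> {c. length c = k \<and> (\<forall>i<k. c!i \<in> A i)}"
    then have h: "length c = k" "\<forall>i<k. c!i \<in> A i" by auto
    have "\<forall>i<length ls. (case c ! i of None \<Rightarrow> al ! i | Some s \<Rightarrow> s \<in> ls ! i)"
    proof (intro allI impI)
      fix i assume "i < length ls"
      then have "c ! i \<in> A i" using h len by auto
      then show "case c ! i of None \<Rightarrow> al ! i | Some s \<Rightarrow> s \<in> ls ! i"
        by (cases "c ! i") (auto simp: A_def split: if_splits)
    qed
    moreover have "setc c \<subseteq> x"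
    proof
      fix s assume "s \<in> setc c"
      then have "Some s \<in> set c" by (simp add: setc_def)
      then obtain i where i: "i < length c" "c ! i = Some s" by (metis in_set_conv_nth)
      then have "Some s \<in> A i" using h by auto
      then show "s \<in> x" by (auto simp: A_def split: if_splits)
    qed
    ultimately show "c \<in> {c \<in> Cset ls al. setc c \<subseteq> x}" using h len by (simp add: Cset_def)
  qed
  have cA: "card (A i0) = (if al ! i0 then 1 else 0) + card (ls ! i0 \<inter> x)"
  proof -
    have "finite (ls ! i0 \<inter> x)" using sub[OF i0] finite_subset by blast
    then have c1: "card (Some ` (ls ! i0 \<inter> x)) = card (ls ! i0 \<inter> x)"
      by (simp add: card_image)
    show ?thesis
    proof (cases "al ! i0")
      case True
      then have "A i0 = insert None (Some ` (ls ! i0 \<inter> x))" by (simp add: A_def)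
      then show ?thesis using True c1 \<open>finite (ls ! i0 \<inter> x)\<close> by simp
    next
      case False
      then show ?thesis using c1 by (simp add: A_def)
    qed
  qed
  have ali: "al ! i0 = (\<not> eps ! i0)" using le i0 by (simp add: al_def)
  have "even (card (A i0))"
  proof (cases "eps ! i0")
    case True
    then show ?thesis using ne ali unfolding cA lf_eval_def by simp
  next
    case False
    then show ?thesis using ne ali unfolding cA lf_eval_def by simp
  qed
  then have "even (\<Prod>i<k. card (A i))" using i0 by (meson even_prod_iff finite_lessThan lessThan_iff)
  moreover have "card {c. length c = k \<and> (\<forall>i<k. c!i \<in> A i)} = (\<Prod>i<k. card (A i))"
    using card_lists_prod[of k A] finA by blast
  ultimately have "even (card {c \<in> Cset ls al. setc c \<subseteq> x})"
    unfolding eq by simp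
  moreover have "L_eval n k ls al (\<lambda>S. S \<subseteq> x) \<longleftrightarrow> odd (card {c \<in> Cset ls al. setc c \<subseteq> x})"
    by (rule L_eval_card[OF len sub])
  ultimately show ?thesis unfolding al_def by blast
qed

lemma card_filter_sum:
  assumes "finite A"
  shows "card {x\<in>A. P x} = (\<Sum>x\<in>A. if P x then 1 else 0)"
proof -
  have "card {x\<in>A. P x} = (\<Sum>x\<in>{x\<in>A. P x}. 1)" by simp
  also have "\<dots> = (\<Sum>x\<in>A. if P x then 1 else 0)" by (rule sum.inter_filter[OF assms])
  finally show ?thesis .
qed

lemma exists_alpha:
  assumes len: "length ls = k" and sub: "\<And>i. i < k \<Longrightarrow> ls ! i \<subseteq> {..<n}" and Y0: "Y {}"
  shows "\<exists>al. length al = k \<and> L_eval n k ls al Y"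
proof -
  define E :: "bool list set" where "E = {al. length al = k}"
  have fE: "finite E" unfolding E_def using finite_lists_length_eq[of "UNIV::bool set" k] by simp
  define Call where "Call = {c. length c = k \<and> (\<forall>i<k. c!i \<in> insert None (Some ` (ls!i)))}"
  have fCall: "finite Call" unfolding Call_def
    using card_lists_prod[of k "\<lambda>i. insert None (Some ` (ls!i))"] sub finite_subset by blast
  define C' where "C' = {c \<in> Call. Y (setc c)}"
  have fC': "finite C'" using fCall by (simp add: C'_def)
  define compat where "compat al c = (\<forall>i<k. c!i = None \<longrightarrow> al!i)" for al and c :: "nat option list"
  have cs: "{c \<in> Cset ls al. Y (setc c)} = {c \<in> C'. compat al c}" for al
  proof (rule set_eqI, rule iffI)
    fix c assume "c \<in> {c \<in> Cset ls al. Y (setc c)}"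
    then have h: "\<forall>i<k. (case c ! i of None \<Rightarrow> al ! i | Some s \<Rightarrow> s \<in> ls ! i)"
      "length c = k" "Y (setc c)" using len by (auto simp: Cset_def)
    have "\<forall>i<k. c!i \<in> insert None (Some ` (ls!i)) \<and> (c!i = None \<longrightarrow> al!i)"
    proof (intro allI impI)
      fix i assume i: "i < k"
      show "c!i \<in> insert None (Some ` (ls!i)) \<and> (c!i = None \<longrightarrow> al!i)"
        using h(1)[rule_format, OF i] by (cases "c!i") auto
    qed
    then show "c \<in> {c \<in> C'. compat al c}" using h by (auto simp: C'_def Call_def compat_def)
  next
    fix c assume "c \<in> {c \<in> C'. compat al c}"
    then have h: "\<forall>i<k. c!i \<in> insert None (Some ` (ls!i))" "\<forall>i<k. c!i = None \<longrightarrow> al!i"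
      "length c = k" "Y (setc c)" by (auto simp: C'_def Call_def compat_def)
    have "\<forall>i<length ls. (case c ! i of None \<Rightarrow> al ! i | Some s \<Rightarrow> s \<in> ls ! i)"
    proof (intro allI impI)
      fix i assume "i < length ls"
      then have i: "i < k" using len by simp
      show "case c ! i of None \<Rightarrow> al ! i | Some s \<Rightarrow> s \<in> ls ! i"
        using h(1)[rule_format, OF i] h(2)[rule_format, OF i] by (cases "c!i") auto
    qed
    then show "c \<in> {c \<in> Cset ls al. Y (setc c)}" using h len by (simp add: Cset_def)
  qed
  define B where "B c i = (if c ! i = None then {True} else (UNIV :: bool set))" for c :: "nat option list" and i
  have cB: "card {al \<in> E. compat al c} = (\<Prod>i<k. card (B c i))" for c
  proof -
    have "{al \<in> E. compat al c} = {al. length al = k \<and> (\<forall>i<k. al ! i \<in> B c i)}"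
      unfolding E_def compat_def B_def by auto
    then show ?thesis using card_lists_prod[of k "B c"] by (simp add: B_def)
  qed
  have oddB: "odd (\<Prod>i<k. card (B c i)) \<longleftrightarrow> c = replicate k None" if "c \<in> Call" for c
  proof -
    have lc: "length c = k" using that by (simp add: Call_def)
    have "odd (\<Prod>i<k. card (B c i)) \<longleftrightarrow> (\<forall>i<k. c ! i = None)"
      by (auto simp: even_prod_iff B_def)
    also have "\<dots> \<longleftrightarrow> c = replicate k None" using lc
      by (auto simp: list_eq_iff_nth_eq)
    finally show ?thesis .
  qed
  have "(\<Sum>al\<in>E. card {c \<in> C'. compat al c}) = (\<Sum>al\<in>E. \<Sum>c\<in>C'. if compat al c then 1 else 0)"
    using fC' by (simp add: card_filter_sum)
  also have "\<dots> = (\<Sum>c\<in>C'. \<Sum>al\<in>E. if compat al c then 1 else 0)" by (rule sum.swap)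
  also have "\<dots> = (\<Sum>c\<in>C'. card {al \<in> E. compat al c})"
    using fE by (simp add: card_filter_sum)
  finally have sw: "(\<Sum>al\<in>E. card {c \<in> C'. compat al c}) = (\<Sum>c\<in>C'. card {al \<in> E. compat al c})" .
  have rep: "replicate k None \<in> C'"
    using Y0 by (auto simp: C'_def Call_def setc_def)
  have "{c \<in> C'. odd (card {al \<in> E. compat al c})} = {replicate k None}"
    using oddB rep unfolding cB C'_def by auto
  then have "odd (\<Sum>c\<in>C'. card {al \<in> E. compat al c})"
    using even_sum_iff[OF fC', of "\<lambda>c. card {al \<in> E. compat al c}"] by simp
  then have "odd (card {al \<in> E. odd (card {c \<in> C'. compat al c})})"
    using sw even_sum_iff[OF fE, of "\<lambda>al. card {c \<in> C'. compat al c}"] by simp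
  then obtain al where "al \<in> E" "odd (card {c \<in> C'. compat al c})"
    by (metis (no_types, lifting) card.empty empty_Collect_eq odd_one even_zero)
  then show ?thesis using L_eval_card[OF len sub, of al Y] cs unfolding E_def by auto
qed




definition ls0 :: "nat \<Rightarrow> nat set list" where "ls0 k = map (\<lambda>i. {i}) [0..<k]"

lemma ls0_indep: assumes "k \<le> n" shows "forms_indep n k (ls0 k)"
  unfolding forms_indep_def
proof (intro conjI allI impI)
  show "length (ls0 k) = k" by (simp add: ls0_def)
  fix i assume "i < k" then show "ls0 k ! i \<subseteq> {..<n}" using assms by (auto simp: ls0_def)
next
  fix I assume h: "I \<subseteq> {..<k} \<and> I \<noteq> {}"
  then obtain s where s: "s \<in> I" by blast
  have "{i\<in>I. s \<in> ls0 k ! i} = {s}" using h s by (auto simp: ls0_def)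
  then show "\<exists>s. odd (card {i\<in>I. s \<in> ls0 k ! i})" by (intro exI[of _ s]) simp
qed

lemma FI_finite: "finite {ls. forms_indep n k ls}"
proof (rule finite_subset)
  show "{ls. forms_indep n k ls} \<subseteq> {ls. set ls \<subseteq> Pow {..<n} \<and> length ls = k}"
    by (force simp: forms_indep_def in_set_conv_nth)
  show "finite {ls. set ls \<subseteq> Pow {..<n} \<and> length ls = k}"
    by (rule finite_lists_length_eq) simp
qed

lemma valid_eq: "{p. valid_pair n k p} = {ls. forms_indep n k ls} \<times> {e::bool list. length e = k}"
  by (auto simp: valid_pair_def)

lemma valid_finite: "finite {p. valid_pair n k p}"
  unfolding valid_eq using FI_finite finite_lists_length_eq[of "UNIV :: bool set" k] by simp

lemma valid_nonempty: "k \<le> n \<Longrightarrow> {p. valid_pair n k p} \<noteq> {}"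
  unfolding valid_eq using ls0_indep[of k n] by (auto intro: exI[of _ "replicate k True"])

lemma pair_bound:
  assumes kn: "k \<le> n" and Y0: "Y {}"
  shows "measure_pmf.prob (pair_unif n k) {p. \<not> L_eval n k (fst p) (map Not (snd p)) Y}
         \<le> 1 - 1 / 2 ^ k"
proof -
  define FI where "FI = {ls. forms_indep n k ls}"
  define E :: "bool list set" where "E = {e. length e = k}"
  define V where "V = {p. valid_pair n k p}"
  have VE: "V = FI \<times> E" unfolding V_def FI_def E_def by (rule valid_eq)
  have fV: "finite V" "V \<noteq> {}" using valid_finite valid_nonempty[OF kn] by (auto simp: V_def)
  have fFI: "finite FI" "FI \<noteq> {}" using FI_finite ls0_indep[OF kn] by (auto simp: FI_def)
  have cE: "card E = 2 ^ k" unfolding E_def using card_lists_length_eq[of "UNIV :: bool set" k] by simp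
  have cV: "card V = card FI * 2 ^ k" using VE cE by (simp add: card_cartesian_product)
  define G where "G = {p. L_eval n k (fst p) (map Not (snd p)) Y}"
  define al where "al ls = (SOME al. length al = k \<and> L_eval n k ls al Y)" for ls
  have al: "length (al ls) = k \<and> L_eval n k ls (al ls) Y" if "ls \<in> FI" for ls
  proof -
    have "length ls = k" "\<And>i. i < k \<Longrightarrow> ls ! i \<subseteq> {..<n}" using that by (auto simp: FI_def forms_indep_def)
    then have "\<exists>al. length al = k \<and> L_eval n k ls al Y" using exists_alpha Y0 by blast
    then show ?thesis unfolding al_def by (rule someI_ex)
  qed
  have "(\<lambda>ls. (ls, map Not (al ls))) ` FI \<subseteq> V \<inter> G"
    using al by (auto simp: VE G_def E_def comp_def)
  moreover have "inj_on (\<lambda>ls. (ls, map Not (al ls))) FI" by (auto simp: inj_on_def)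
  ultimately have "card FI \<le> card (V \<inter> G)"
    using fV by (metis card_image card_mono finite_Int)
  have pG: "measure_pmf.prob (pair_unif n k) G = card (V \<inter> G) / card V"
    unfolding pair_unif_def V_def using fV by (simp add: measure_pmf_of_set V_def)
  have "1 / 2 ^ k \<le> measure_pmf.prob (pair_unif n k) G"
  proof -
    have "1 / 2 ^ k = real (card FI) / real (card V)" using cV fFI by (simp add: field_simps)
    also have "\<dots> \<le> card (V \<inter> G) / card V"
      using \<open>card FI \<le> card (V \<inter> G)\<close> by (simp add: divide_right_mono)
    finally show ?thesis using pG by simp
  qed
  moreover have "{p. \<not> L_eval n k (fst p) (map Not (snd p)) Y} = UNIV - G" by (auto simp: G_def)
  ultimately show ?thesis using measure_pmf.prob_compl[of G "pair_unif n k"] by simp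
qed



lemma card_Sset:
  assumes "1 \<le> k"
  shows "card {S. S \<subseteq> {..<n} \<and> card S \<le> k} \<le> n ^ k + 1"
proof -
  define L where "L = {xs. set xs \<subseteq> {..<n} \<and> length xs = k}"
  have "{S. S \<subseteq> {..<n} \<and> card S \<le> k} \<subseteq> insert {} (set ` L)"
  proof
    fix S assume S: "S \<in> {S. S \<subseteq> {..<n} \<and> card S \<le> k}"
    show "S \<in> insert {} (set ` L)"
    proof (cases "S = {}")
      case False
      have fS: "finite S" using S finite_subset by auto
      then obtain a where a: "a \<in> S" using False by auto
      define xs where "xs = sorted_list_of_set S @ replicate (k - card S) a"
      have "set xs = S" using fS a by (auto simp: xs_def)
      moreover have "length xs = k" using S fS by (simp add: xs_def)
      ultimately show ?thesis using S by (auto simp: L_def)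
    qed simp
  qed
  then have "card {S. S \<subseteq> {..<n} \<and> card S \<le> k} \<le> card (insert {} (set ` L))"
    by (rule card_mono[rotated]) (simp add: L_def finite_lists_length_eq)
  also have "\<dots> \<le> card (set ` L) + 1"
    using finite_lists_length_eq[of "{..<n}" k] by (simp add: card_insert_if L_def)
  also have "\<dots> \<le> card L + 1" using card_image_le[of L set] by (simp add: L_def finite_lists_length_eq)
  also have "card L = n ^ k" unfolding L_def by (simp add: card_lists_length_eq)
  finally show ?thesis .
qed

lemma unif_bound:
  assumes kn: "k \<le> n"
  shows "measure_pmf.prob (P_unif_data n k m) {D. LV_solvable n k m D}
     \<le> 2 ^ card {S. S \<subseteq> {..<n} \<and> card S \<le> k} * (1 - 1 / 2 ^ k) ^ m"
proof -
  define Ss where "Ss = {S. S \<subseteq> {..<n} \<and> card S \<le> k}"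
  have fSs: "finite Ss" unfolding Ss_def by (rule finite_subset[of _ "Pow {..<n}"]) auto
  define TT where "TT = {T \<in> Pow Ss. {} \<in> T}"
  have fTT: "finite TT" using fSs by (simp add: TT_def)
  define B where "B T = {p. \<not> L_eval n k (fst p) (map Not (snd p)) (\<lambda>S. S \<in> T)}" for T
  define q :: real where "q = 1 - 1 / 2 ^ k"
  let ?P = "P_unif_data n k m"
  have sub: "{D. LV_solvable n k m D} \<subseteq> (\<Union>T\<in>TT. Pi {..<m} (\<lambda>_. B T))"
  proof
    fix D assume "D \<in> {D. LV_solvable n k m D}"
    then obtain Y where Y: "Y {}" "\<forall>j<m. \<not> L_eval n k (fst (D j)) (map Not (snd (D j))) Y"
      by (auto simp: LV_solvable_def)
    define T where "T = {S \<in> Ss. Y S}"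
    have eqL: "L_eval n k ls al Y = L_eval n k ls al (\<lambda>S. S \<in> T)" for ls al
      unfolding L_eval_def T_def Ss_def by (simp add: conj_ac)
    have "T \<in> TT" using Y(1) by (auto simp: T_def TT_def Ss_def)
    moreover have "D \<in> Pi {..<m} (\<lambda>_. B T)" using Y(2) eqL by (auto simp: B_def)
    ultimately show "D \<in> (\<Union>T\<in>TT. Pi {..<m} (\<lambda>_. B T))" by blast
  qed
  have "measure_pmf.prob ?P {D. LV_solvable n k m D} \<le> measure_pmf.prob ?P (\<Union>T\<in>TT. Pi {..<m} (\<lambda>_. B T))"
    using sub by (rule measure_pmf.finite_measure_mono) simp
  also have "\<dots> \<le> (\<Sum>T\<in>TT. measure_pmf.prob ?P (Pi {..<m} (\<lambda>_. B T)))"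
    by (rule measure_pmf.finite_measure_subadditive_finite) (use fTT in auto)
  also have "\<dots> \<le> (\<Sum>T\<in>TT. q ^ m)"
  proof (rule sum_mono)
    fix T assume T: "T \<in> TT"
    have "measure_pmf.prob ?P (Pi {..<m} (\<lambda>_. B T)) = (\<Prod>j<m. measure_pmf.prob (pair_unif n k) (B T))"
      unfolding P_unif_data_def by (rule measure_Pi_pmf_Pi) simp
    also have "\<dots> = measure_pmf.prob (pair_unif n k) (B T) ^ m" by simp
    also have "\<dots> \<le> q ^ m"
    proof (rule power_mono)
      show "measure_pmf.prob (pair_unif n k) (B T) \<le> q"
        unfolding B_def q_def by (rule pair_bound[OF kn]) (use T in \<open>auto simp: TT_def\<close>)
    qed simp
    finally show "measure_pmf.prob ?P (Pi {..<m} (\<lambda>_. B T)) \<le> q ^ m" .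
  qed
  also have "\<dots> = card TT * q ^ m" by simp
  also have "\<dots> \<le> 2 ^ card Ss * q ^ m"
  proof (rule mult_right_mono)
    have "card TT \<le> card (Pow Ss)" by (rule card_mono) (use fSs in \<open>auto simp: TT_def\<close>)
    then have "card TT \<le> 2 ^ card Ss" using fSs by (simp add: card_Pow)
    then show "real (card TT) \<le> 2 ^ card Ss" by (metis of_nat_le_iff of_nat_numeral of_nat_power)
    show "0 \<le> q ^ m" unfolding q_def by simp
  qed
  finally show ?thesis unfolding q_def Ss_def .
qed



lemma flats_finite: "finite (flats n k)"
  unfolding flats_def using valid_finite by simp

lemma qx_nonempty:
  assumes "1 \<le> k" "k \<le> n" "x \<subseteq> {..<n}"
  shows "{V \<in> flats n k. x \<notin> V} \<noteq> {}"
proof -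
  define p where "p = (ls0 k, map (\<lambda>i. i \<notin> x) [0..<k])"
  have v: "valid_pair n k p" using ls0_indep[OF assms(2)] by (simp add: valid_pair_def p_def)
  have "0 < k" using assms by simp
  have "x \<notin> flat_of n p"
  proof
    assume "x \<in> flat_of n p"
    then have "lf_eval (fst p ! 0) x = snd p ! 0" using \<open>0 < k\<close> by (auto simp: flat_of_def p_def ls0_def)
    then show False using \<open>0 < k\<close> by (auto simp: p_def ls0_def lf_eval_def split: if_splits)
  qed
  then show ?thesis using v unfolding flats_def by blast
qed

lemma planted_zero:
  assumes k1: "1 \<le> k" and kn: "k \<le> n"
    and rep: "\<And>F j. F j \<in> flats n k \<Longrightarrow> valid_pair n k (rep n F j) \<and> flat_of n (rep n F j) = F j"
  shows "measure_pmf.prob (P_planted n k m) {F. \<not> LV_solvable n k m (rep n F)} = 0"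
proof -
  have "LV_solvable n k m (rep n F)" if F: "F \<in> set_pmf (P_planted n k m)" for F
  proof -
    have fP: "finite (Pow {..<n::nat})" "Pow {..<n::nat} \<noteq> {}" by auto
    obtain x where x: "x \<subseteq> {..<n}" and Fx: "F \<in> set_pmf (Pi_pmf {..<m} {} (\<lambda>_. qx n k x))"
      using F unfolding P_planted_def by (auto simp: set_pmf_of_set[OF fP(2) fP(1)])
    have sq: "set_pmf (qx n k x) = {V \<in> flats n k. x \<notin> V}"
      unfolding qx_def using qx_nonempty[OF k1 kn x] flats_finite by simp
    have Fj: "F j \<in> flats n k \<and> x \<notin> F j" if "j < m" for j
    proof -
      have "F j \<in> set_pmf (qx n k x)"
        using Fx that unfolding set_Pi_pmf[OF finite_lessThan] by (auto simp: PiE_dflt_def)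
      then show ?thesis using sq by simp
    qed
    show ?thesis unfolding LV_solvable_def
    proof (intro exI[of _ "\<lambda>S. S \<subseteq> x"] conjI allI impI)
      show "{} \<subseteq> x" by simp
      fix j assume j: "j < m"
      obtain ls eps where p: "rep n F j = (ls, eps)" by (cases "rep n F j")
      have vp: "valid_pair n k (ls, eps)" and fl: "flat_of n (ls, eps) = F j"
        using rep[of F j] Fj[OF j] p by auto
      have len: "length ls = k" and sub: "\<And>i. i < k \<Longrightarrow> ls ! i \<subseteq> {..<n}" and le: "length eps = k"
        using vp by (auto simp: valid_pair_def forms_indep_def)
      have "x \<notin> flat_of n (ls, eps)" using fl Fj[OF j] by simp
      then obtain i0 where "i0 < k" "lf_eval (ls ! i0) x \<noteq> eps ! i0"
        using x len by (auto simp: flat_of_def)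
      then have "\<not> L_eval n k ls (map Not eps) (\<lambda>S. S \<subseteq> x)"
        by (intro planted_eval[OF len sub le]) auto
      then show "\<not> L_eval n k (fst (rep n F j)) (map Not (snd (rep n F j))) (\<lambda>S. S \<subseteq> x)"
        using p by simp
    qed
  qed
  then show ?thesis by (auto simp: measure_pmf_zero_iff)
qed



theorem mainTheorem8:
  fixes k :: nat and \<Delta> :: real
    and rep :: "nat \<Rightarrow> (nat \<Rightarrow> nat set set) \<Rightarrow> nat \<Rightarrow> nat set list \<times> bool list"
  assumes "k \<ge> 1"
    and "\<Delta> > Delta_k k"
    and "\<And>n F j. F j \<in> flats n k \<Longrightarrow>
           valid_pair n k (rep n F j) \<and> flat_of n (rep n F j) = F j"
  shows "(\<lambda>n. let m = nat \<lceil>\<Delta> * real n ^ k\<rceil> in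
            max (measure_pmf.prob (P_unif_data n k m) {D. LV_solvable n k m D})
                (measure_pmf.prob (P_planted n k m) {F. \<not> LV_solvable n k m (rep n F)}))
         \<longlonglongrightarrow> 0"
proof -
  define q :: real where "q = 1 - 1 / 2 ^ k"
  have k1: "1 \<le> k" using assms(1) .
  have "(2::real) ^ 1 \<le> 2 ^ k" by (rule power_increasing) (use k1 in auto)
  then have "(1::real) / 2 ^ k \<le> 1 / 2" by (intro divide_left_mono) auto
  then have q0: "0 < q" "q < 1" unfolding q_def by auto
  have "2 powr (- real k) = 1 / 2 ^ k" by (simp add: powr_minus powr_realpow divide_inverse)
  then have Dk: "Delta_k k = ln (1/2) / ln q" unfolding Delta_k_def q_def by simp
  have lq: "ln q < 0" using q0 by simp
  have "\<Delta> * ln q < ln (1/2)" using assms(2) lq unfolding Dk by (simp add: neg_divide_less_eq)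
  then have "ln 2 + \<Delta> * ln q < 0" by (simp add: ln_div)
  define r where "r = 2 * q powr \<Delta>"
  have r0: "0 < r" using q0 by (simp add: r_def)
  have "r = exp (ln 2 + \<Delta> * ln q)" using q0 by (simp add: r_def powr_def exp_add mult.commute)
  then have r1: "r < 1" using \<open>ln 2 + \<Delta> * ln q < 0\<close> by simp
  have Dpos: "0 < \<Delta>"
  proof -
    have "ln (1/2::real) < 0" by simp
    then have "0 < Delta_k k" unfolding Dk using lq by (simp add: divide_neg_neg)
    then show ?thesis using assms(2) by simp
  qed
  define f where "f n = (let m = nat \<lceil>\<Delta> * real n ^ k\<rceil> in
            max (measure_pmf.prob (P_unif_data n k m) {D. LV_solvable n k m D})
                (measure_pmf.prob (P_planted n k m) {F. \<not> LV_solvable n k m (rep n F)}))" for n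
  have bnd: "0 \<le> f n \<and> f n \<le> 2 * r ^ n" if n: "k \<le> n" for n
  proof -
    define m where "m = nat \<lceil>\<Delta> * real n ^ k\<rceil>"
    define a where "a = measure_pmf.prob (P_unif_data n k m) {D. LV_solvable n k m D}"
    have b0: "measure_pmf.prob (P_planted n k m) {F. \<not> LV_solvable n k m (rep n F)} = 0"
      by (rule planted_zero[OF k1 n]) (use assms(3) in blast)
    have fa: "f n = max a 0" unfolding f_def Let_def m_def[symmetric] a_def b0 ..
    have a0: "0 \<le> a" unfolding a_def by simp
    have "a \<le> 2 ^ card {S. S \<subseteq> {..<n} \<and> card S \<le> k} * q ^ m"
      unfolding a_def q_def by (rule unif_bound[OF n])
    also have "\<dots> \<le> 2 ^ (n ^ k + 1) * q ^ m"
      by (rule mult_right_mono[OF power_increasing]) (use card_Sset[OF k1, of n] q0 in auto)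
    also have "q ^ m \<le> q powr (\<Delta> * real n ^ k)"
    proof -
      have "q ^ m = q powr (real m)" using q0 by (simp add: powr_realpow)
      also have "\<dots> \<le> q powr (\<Delta> * real n ^ k)"
        by (rule powr_mono') (use q0 real_nat_ceiling_ge in \<open>auto simp: m_def\<close>)
      finally show ?thesis .
    qed
    then have "2 ^ (n ^ k + 1) * q ^ m \<le> 2 ^ (n ^ k + 1) * q powr (\<Delta> * real n ^ k)" by simp
    also have "\<dots> = 2 * r ^ (n ^ k)"
    proof -
      have "(2::real) ^ (n ^ k) * q powr (\<Delta> * real n ^ k) = 2 powr (real (n ^ k)) * (q powr \<Delta>) powr (real (n ^ k))"
      proof -
        have e1: "(2::real)^(n^k) = 2 powr real (n^k)" by (rule powr_realpow[symmetric]) simp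
        have e2: "q powr (\<Delta> * real n ^ k) = (q powr \<Delta>) powr real (n^k)" by (simp add: powr_powr)
        show ?thesis unfolding e1 e2 ..
      qed
      also have "\<dots> = r powr (real (n ^ k))" unfolding r_def using q0 by (simp add: powr_mult)
      also have "\<dots> = r ^ (n ^ k)" by (rule powr_realpow) (rule r0)
      finally show ?thesis by simp
    qed
    also have "\<dots> \<le> 2 * r ^ n"
    proof -
      have "n \<le> n ^ k"
      proof (cases "n = 0")
        case False then show ?thesis using k1 by (metis One_nat_def le0 less_one not_le power_increasing power_one_right)
      qed simp
      then have "r ^ (n ^ k) \<le> r ^ n" using r0 r1 by (intro power_decreasing) auto
      then show ?thesis by simp
    qed
    finally show ?thesis using fa a0 by simp
  qed
  have lim: "(\<lambda>n. 2 * r ^ n) \<longlonglongrightarrow> 0"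
    using LIMSEQ_power_zero[of r] r0 r1 tendsto_mult_right_zero[of "\<lambda>n. r ^ n" sequentially 2]
    by (simp add: mult.commute)
  have "f \<longlonglongrightarrow> 0"
  proof (rule tendsto_sandwich[OF _ _ tendsto_const lim])
    show "\<forall>\<^sub>F n in sequentially. 0 \<le> f n" using bnd by (auto simp: eventually_sequentially)
    show "\<forall>\<^sub>F n in sequentially. f n \<le> 2 * r ^ n" using bnd by (auto simp: eventually_sequentially)
  qed
  then show ?thesis unfolding f_def .
qed

end
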